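(* Consider the power-law kinetic system on species $A_1,A_2,A_3$ with reactions $R_1: A_1+A_3\to A_1+A_2$, $R_2: A_1+A_2\to 2A_3$, $R_3: 2A_3\to A_1+A_3$, $R_4: A_3\to 0$, $R_5: A_3\to A_2+A_3$, with rates $k_r x^{F_r}$ where the kinetic order rows are $F_{R_1}=(0.5,0,0.5)$, $F_{R_2}=(1,1,0)$, $F_{R_3}=(0,0,1)$, $F_{R_4}=(0,0,1)$, $F_{R_5}=(0,0,1)$. This network has deficiency one, is not $t$-minimal, and the complexes $A_1+A_2$ and $2A_3$ do not form a cut pair; nevertheless the system has the capacity for multistationarity: there exist positive rate constants $k_{R_1},\dots,k_{R_5}$ for which $dx/dt=\sum_r k_r x^{F_r}(y'_r-y_r)$ has two distinct positive equilibria $c^*,c^{**}$ with $c^*-c^{**}$ in the stoichiometric subspace.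
   Context: For $x\in\mathbb{R}^3_{>0}$, $x^{F}=\prod_s x_s^{F_s}$; $y_r\to y'_r$ denotes reaction $r$. The stoichiometric subspace $S$ is the span of the reaction vectors. The deficiency is $n-l-\dim S$ ($n$ complexes, $l$ linkage classes, i.e. connected components of the reaction graph). A network is $t$-minimal if its number of terminal strong linkage classes (strongly connected components with no outgoing reaction) equals its number of linkage classes. Two adjacent complexes form a cut pair if removing the reaction arrow(s) between them disconnects their linkage class. *)

theory Defs
  imports "HOL-Analysis.Analysis"
begin

text \<open>Complexes are vectors in R^3 (coordinates = stoichiometric coefficients of
A1, A2, A3); a reaction y -> y' is the pair (y, y').\<close>

type_synonym cplx = "real^3"
type_synonym reaction = "cplx \<times> cplx"

definition complexes :: "reaction set \<Rightarrow> cplx set" where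
  "complexes R = fst ` R \<union> snd ` R"

definition linked :: "reaction set \<Rightarrow> (cplx \<times> cplx) set" where
  "linked R = (R \<union> R\<inverse>)\<^sup>*"

definition linkage_classes :: "reaction set \<Rightarrow> cplx set set" where
  "linkage_classes R = complexes R // linked R"

definition stoich_subspace :: "reaction set \<Rightarrow> cplx set" where
  "stoich_subspace R = span {snd r - fst r | r. r \<in> R}"

definition deficiency :: "reaction set \<Rightarrow> int" where
  "deficiency R = int (card (complexes R)) - int (card (linkage_classes R))
                   - int (dim (stoich_subspace R))"

definition strong_linkage_classes :: "reaction set \<Rightarrow> cplx set set" where
  "strong_linkage_classes R =
     complexes R // {(a, b). (a, b) \<in> R\<^sup>* \<and> (b, a) \<in> R\<^sup>*}"

definition terminal_strong_linkage_classes :: "reaction set \<Rightarrow> cplx set set" where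
  "terminal_strong_linkage_classes R =
     {C \<in> strong_linkage_classes R. \<forall>(a, b) \<in> R. a \<in> C \<longrightarrow> b \<in> C}"

definition t_minimal :: "reaction set \<Rightarrow> bool" where
  "t_minimal R \<longleftrightarrow>
     card (terminal_strong_linkage_classes R) = card (linkage_classes R)"

definition cut_pair :: "reaction set \<Rightarrow> cplx \<Rightarrow> cplx \<Rightarrow> bool" where
  "cut_pair R a b \<longleftrightarrow>
     ((a, b) \<in> R \<or> (b, a) \<in> R) \<and> (a, b) \<notin> linked (R - {(a, b), (b, a)})"

definition xpow :: "real^3 \<Rightarrow> real^3 \<Rightarrow> real" where
  "xpow x F = (\<Prod>s\<in>UNIV. (x $ s) powr (F $ s))"

definition positive_vec :: "real^3 \<Rightarrow> bool" where
  "positive_vec x \<longleftrightarrow> (\<forall>s. x $ s > 0)"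

definition yR :: "nat \<Rightarrow> cplx" where
  "yR r = (if r = 1 then vector [1, 0, 1]      \<comment> \<open>A1 + A3\<close>
           else if r = 2 then vector [1, 1, 0] \<comment> \<open>A1 + A2\<close>
           else if r = 3 then vector [0, 0, 2] \<comment> \<open>2 A3\<close>
           else vector [0, 0, 1])              \<comment> \<open>A3 (r = 4, 5)\<close>"

definition yP :: "nat \<Rightarrow> cplx" where
  "yP r = (if r = 1 then vector [1, 1, 0]      \<comment> \<open>A1 + A2\<close>
           else if r = 2 then vector [0, 0, 2] \<comment> \<open>2 A3\<close>
           else if r = 3 then vector [1, 0, 1] \<comment> \<open>A1 + A3\<close>
           else if r = 4 then 0                \<comment> \<open>0\<close>
           else vector [0, 1, 1])              \<comment> \<open>A2 + A3\<close>"

definition kinF :: "nat \<Rightarrow> real^3" where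
  "kinF r = (if r = 1 then vector [1/2, 0, 1/2]
             else if r = 2 then vector [1, 1, 0]
             else vector [0, 0, 1])"

definition net :: "reaction set" where
  "net = {(yR r, yP r) | r. r \<in> {1..5::nat}}"

definition rhs :: "(nat \<Rightarrow> real) \<Rightarrow> real^3 \<Rightarrow> real^3" where
  "rhs k x = (\<Sum>r\<in>{1..5::nat}. (k r * xpow x (kinF r)) *\<^sub>R (yP r - yR r))"

end

theory Submission imports Defs begin

lemma vec3_eq: "(vector [a1,a2,a3] :: real^3) = vector [b1,b2,b3] \<longleftrightarrow> a1=b1 \<and> a2=b2 \<and> a3=b3"
  by (auto simp: vec_eq_iff forall_3)
lemma vec3_0: "(vector [a1,a2,a3] :: real^3) = 0 \<longleftrightarrow> a1=0 \<and> a2=0 \<and> a3=0"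
  by (auto simp: vec_eq_iff forall_3)

definition "va = (vector [1,0,1] :: real^3)"
definition "vb = (vector [1,1,0] :: real^3)"
definition "vc = (vector [0,0,2] :: real^3)"
definition "vd = (vector [0,0,1] :: real^3)"
definition "vz = (0 :: real^3)"
definition "ve = (vector [0,1,1] :: real^3)"

lemma distinct6: "distinct [va,vb,vc,vd,vz,ve]"
  by (simp add: va_def vb_def vc_def vd_def vz_def ve_def vec3_eq vec3_0 eq_commute[of 0])


lemma I5: "{1..5::nat} = {1,2,3,4,5}" by auto

lemma net_img: "net = (\<lambda>r. (yR r, yP r)) ` {1,2,3,4,5}"
  unfolding net_def I5 by blast

lemma net_eq: "net = {(va,vb),(vb,vc),(vc,va),(vd,vz),(vd,ve)}"
  unfolding net_img by (simp add: yR_def yP_def va_def vb_def vc_def vd_def vz_def ve_def)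

lemma cplx: "complexes net = {va,vb,vc,vd,vz,ve}"
  unfolding complexes_def net_eq by auto

lemma card6: "card (complexes net) = 6"
  using distinct6 unfolding cplx by simp

lemmas dist = distinct6[simplified]

definition "C1 = {va,vb,vc}"
definition "C2 = {vd,vz,ve}"
definition "cmpt x = (if x \<in> C1 then C1 else if x \<in> C2 then C2 else {x})"


lemma C12: "C1 \<inter> C2 = {}" using dist unfolding C1_def C2_def by auto

lemma mem: "va \<in> C1" "vb \<in> C1" "vc \<in> C1" "vd \<in> C2" "vz \<in> C2" "ve \<in> C2"
  by (auto simp: C1_def C2_def)
lemma nmem: "vd \<notin> C1" "vz \<notin> C1" "ve \<notin> C1" "va \<notin> C2" "vb \<notin> C2" "vc \<notin> C2"
  using mem C12 by blast+
lemma C1ne2: "C1 \<noteq> C2" using mem nmem by blast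

lemma same: "y \<in> cmpt x \<Longrightarrow> cmpt y = cmpt x"
  using C12 unfolding cmpt_def by (auto split: if_splits)

abbreviation "EE \<equiv> net \<union> net\<inverse>"

lemma EE_eq: "EE = {(va,vb),(vb,vc),(vc,va),(vd,vz),(vd,ve),(vb,va),(vc,vb),(va,vc),(vz,vd),(ve,vd)}"
  unfolding net_eq by auto

lemma edge: "(y,w) \<in> EE \<Longrightarrow> w \<in> cmpt y"
  unfolding EE_eq by (auto simp: cmpt_def mem nmem)

lemma linked_eq: "linked net = {(x,y). y \<in> cmpt x}"
proof
  show "linked net \<subseteq> {(x,y). y \<in> cmpt x}"
    unfolding linked_def
  proof (rule subrelI)
    fix x y assume "(x,y) \<in> (net \<union> net\<inverse>)\<^sup>*"
    then show "(x,y) \<in> {(x,y). y \<in> cmpt x}"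
    proof (induction rule: rtrancl_induct)
      case base then show ?case by (simp add: cmpt_def)
    next
      case (step y w)
      have "w \<in> cmpt y" by (rule edge) (use step(2) in auto)
      then show ?case using same[of y x] step(3) by auto
    qed
  qed
next
  have e: "(va,vb) \<in> EE" "(vb,vc) \<in> EE" "(vc,va) \<in> EE" "(vd,vz) \<in> EE" "(vd,ve) \<in> EE"
    "(vb,va) \<in> EE" "(vc,vb) \<in> EE" "(va,vc) \<in> EE" "(vz,vd) \<in> EE" "(ve,vd) \<in> EE"
    unfolding EE_eq by auto
  have z: "(vz,ve) \<in> EE\<^sup>*" "(ve,vz) \<in> EE\<^sup>*" using e
    by (meson converse_rtrancl_into_rtrancl r_into_rtrancl)+
  have c1: "\<forall>x\<in>C1. \<forall>y\<in>C1. (x,y) \<in> EE\<^sup>*"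
    unfolding C1_def using e by (simp add: r_into_rtrancl)
  have c2: "\<forall>x\<in>C2. \<forall>y\<in>C2. (x,y) \<in> EE\<^sup>*"
    unfolding C2_def using e z by (simp add: r_into_rtrancl)
  show "{(x,y). y \<in> cmpt x} \<subseteq> linked net"
    unfolding linked_def cmpt_def using c1 c2
    by (auto split: if_splits)
qed

lemma linkage2: "linkage_classes net = {C1, C2}"
proof -
  have "linkage_classes net = (\<Union>x\<in>{va,vb,vc,vd,vz,ve}. {cmpt x})"
    unfolding linkage_classes_def quotient_def cplx linked_eq by auto
  also have "\<dots> = {C1,C2}" by (auto simp: cmpt_def mem nmem)
  finally show ?thesis .
qed

lemma card_link: "card (linkage_classes net) = 2"
  unfolding linkage2 using C1ne2 by simp

lemma netE: "(y,w) \<in> net \<Longrightarrow> (y \<in> C1 \<and> w \<in> C1) \<or> (y = vd \<and> w \<in> C2)"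
  unfolding net_eq using mem by auto

definition "reach x = (if x \<in> C1 then C1 else if x = vd then C2 else {x})"

lemma star_eq: "net\<^sup>* = {(x,y). y \<in> reach x}"
proof
  show "net\<^sup>* \<subseteq> {(x,y). y \<in> reach x}"
  proof (rule subrelI)
    fix x y assume "(x,y) \<in> net\<^sup>*"
    then show "(x,y) \<in> {(x,y). y \<in> reach x}"
    proof (induction rule: rtrancl_induct)
      case base then show ?case using mem by (simp add: reach_def)
    next
      case (step y w)
      from netE[OF step(2)] step(3) show ?case
        using mem nmem C12 by (auto simp: reach_def split: if_splits)
    qed
  qed
next
  have e: "(va,vb) \<in> net" "(vb,vc) \<in> net" "(vc,va) \<in> net" "(vd,vz) \<in> net" "(vd,ve) \<in> net"
    unfolding net_eq by auto
  have t: "(va,vc) \<in> net\<^sup>*" "(vb,va) \<in> net\<^sup>*" "(vc,vb) \<in> net\<^sup>*"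
    using e by (meson converse_rtrancl_into_rtrancl r_into_rtrancl)+
  have c1: "\<forall>x\<in>C1. \<forall>y\<in>C1. (x,y) \<in> net\<^sup>*"
    unfolding C1_def using e t by (simp add: r_into_rtrancl)
  have c2: "\<forall>y\<in>C2. (vd,y) \<in> net\<^sup>*"
    unfolding C2_def using e by (simp add: r_into_rtrancl)
  show "{(x,y). y \<in> reach x} \<subseteq> net\<^sup>*"
    unfolding reach_def using c1 c2
    by (auto split: if_splits)
qed

lemma sclass: "x \<in> complexes net \<Longrightarrow>
   {(a, b). (a, b) \<in> net\<^sup>* \<and> (b, a) \<in> net\<^sup>*} `` {x} = (if x \<in> C1 then C1 else {x})"
  unfolding star_eq cplx using mem nmem dist
  by (auto simp: reach_def)

lemma strong_eq: "strong_linkage_classes net = {C1, {vd}, {vz}, {ve}}"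
proof -
  have "strong_linkage_classes net = (\<Union>x\<in>complexes net. {if x \<in> C1 then C1 else {x}})"
    unfolding strong_linkage_classes_def quotient_def using sclass by auto
  also have "\<dots> = {C1, {vd}, {vz}, {ve}}" unfolding cplx using mem nmem by auto
  finally show ?thesis .
qed

lemma term_eq: "terminal_strong_linkage_classes net = {C1, {vz}, {ve}}"
proof -
  have a: "\<forall>(a, b) \<in> net. a \<in> C1 \<longrightarrow> b \<in> C1" using netE nmem by blast
  have b: "\<not> (\<forall>(a, b) \<in> net. a \<in> {vd} \<longrightarrow> b \<in> {vd})"
    using dist unfolding net_eq by auto
  have c: "\<forall>(a, b) \<in> net. a \<in> {vz} \<longrightarrow> b \<in> {vz}" "\<forall>(a, b) \<in> net. a \<in> {ve} \<longrightarrow> b \<in> {ve}"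
    using netE nmem mem dist by fastforce+
  show ?thesis unfolding terminal_strong_linkage_classes_def strong_eq
    using a b c by auto
qed

lemma card_term: "card (terminal_strong_linkage_classes net) = 3"
proof -
  have "C1 \<noteq> {vz}" "C1 \<noteq> {ve}" "{vz} \<noteq> {ve}" using mem nmem dist by auto
  then show ?thesis unfolding term_eq by simp
qed

lemma stoich_UNIV: "stoich_subspace net = UNIV"
proof -
  let ?S = "{snd r - fst r | r. r \<in> net}"
  have v3: "va - vc \<in> ?S" "vz - vd \<in> ?S" "ve - vd \<in> ?S" unfolding net_eq by force+
  have "x \<in> span ?S" for x :: "real^3"
  proof -
    have "x = (x$1) *\<^sub>R (va - vc) + (x$2) *\<^sub>R (ve - vd) + (-(x$1 + x$3)) *\<^sub>R (vz - vd)"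
      by (simp add: vec_eq_iff forall_3 va_def vc_def vz_def vd_def ve_def)
    also have "\<dots> \<in> span ?S"
      by (intro span_add span_mul span_base v3)
    finally show ?thesis .
  qed
  then show ?thesis unfolding stoich_subspace_def by auto
qed

lemma defi: "deficiency net = 1"
  unfolding deficiency_def card6 card_link stoich_UNIV dim_UNIV by simp


lemma prod3: "prod f (UNIV::3 set) = f 1 * f 2 * f 3"
  unfolding UNIV_3 by (simp add: mult.assoc)

lemma xpv: "xpow (vector [x1,x2,x3]) (vector [a,b,c]) = x1 powr a * x2 powr b * x3 powr c"
  unfolding xpow_def prod3 by simp

lemma h4: "(4::real) powr (1/2) = 2" by (simp add: powr_half_sqrt)

definition "kk = (\<lambda>r::nat. if r = 3 then 2 else (1::real))"

lemma rhs_exp: "rhs k x = (k 1 * xpow x (kinF 1)) *\<^sub>R (yP 1 - yR 1) + ((k 2 * xpow x (kinF 2)) *\<^sub>R (yP 2 - yR 2)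
  + ((k 3 * xpow x (kinF 3)) *\<^sub>R (yP 3 - yR 3) + ((k 4 * xpow x (kinF 4)) *\<^sub>R (yP 4 - yR 4)
  + (k 5 * xpow x (kinF 5)) *\<^sub>R (yP 5 - yR 5))))"
  unfolding rhs_def I5 by simp

lemma kF: "kinF 1 = vector [1/2, 0, 1/2]" "kinF 2 = vector [1,1,0]" "kinF 3 = vector [0,0,1]"
  "kinF 4 = vector [0,0,1]" "kinF 5 = vector [0,0,1]"
  by (simp_all add: kinF_def)

lemma yy: "yR 1 = vector [1, 0, 1]" "yR 2 = vector [1, 1, 0]" "yR 3 = vector [0, 0, 2]"
   "yR 4 = vector [0, 0, 1]" "yR 5 = vector [0, 0, 1]"
   "yP 1 = vector [1, 1, 0]" "yP 2 = vector [0, 0, 2]" "yP 3 = vector [1, 0, 1]"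
   "yP 4 = 0" "yP 5 = vector [0, 1, 1]"
  by (simp_all add: yR_def yP_def)

lemma eq1: "rhs kk (vector [4,2,4]) = 0"
  unfolding rhs_exp kF xpv yy
  by (simp add: h4 kk_def yy vec_eq_iff forall_3)

lemma eq2: "rhs kk (vector [1,2,1]) = 0"
  unfolding rhs_exp kF xpv yy
  by (simp add: kk_def yy vec_eq_iff forall_3)
theorem mainTheorem7:
  shows "deficiency net = 1
    \<and> \<not> t_minimal net
    \<and> \<not> cut_pair net (vector [1, 1, 0]) (vector [0, 0, 2])
    \<and> (\<exists>k :: nat \<Rightarrow> real. (\<forall>r\<in>{1..5}. k r > 0) \<and>
         (\<exists>c1 c2. positive_vec c1 \<and> positive_vec c2 \<and> c1 \<noteq> c2 \<and>
            rhs k c1 = 0 \<and> rhs k c2 = 0 \<and> c1 - c2 \<in> stoich_subspace net))"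
proof (intro conjI)
  show "deficiency net = 1" by (rule defi)
  show "\<not> t_minimal net" unfolding t_minimal_def card_term card_link by simp
  have "(vb, vc) \<in> linked (net - {(vb, vc), (vc, vb)})"
  proof -
    have "(va,vb) \<in> net - {(vb, vc), (vc, vb)}" "(vc,va) \<in> net - {(vb, vc), (vc, vb)}"
      using dist unfolding net_eq by auto
    then have "(vb,va) \<in> (net - {(vb, vc), (vc, vb)}) \<union> (net - {(vb, vc), (vc, vb)})\<inverse>"
      "(va,vc) \<in> (net - {(vb, vc), (vc, vb)}) \<union> (net - {(vb, vc), (vc, vb)})\<inverse>" by auto
    then show ?thesis unfolding linked_def
      by (meson converse_rtrancl_into_rtrancl r_into_rtrancl)
  qed
  then show "\<not> cut_pair net (vector [1, 1, 0]) (vector [0, 0, 2])"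
    unfolding cut_pair_def vb_def vc_def by simp
  show "\<exists>k :: nat \<Rightarrow> real. (\<forall>r\<in>{1..5}. k r > 0) \<and>
         (\<exists>c1 c2. positive_vec c1 \<and> positive_vec c2 \<and> c1 \<noteq> c2 \<and>
            rhs k c1 = 0 \<and> rhs k c2 = 0 \<and> c1 - c2 \<in> stoich_subspace net)"
  proof (intro exI conjI)
    show "\<forall>r\<in>{1..5}. kk r > 0" by (simp add: kk_def)
    show "positive_vec (vector [1,2,1] :: real^3)" "positive_vec (vector [4,2,4] :: real^3)"
      by (simp_all add: positive_vec_def forall_3)
    show "(vector [1,2,1] :: real^3) \<noteq> vector [4,2,4]" by (simp add: vec3_eq)
    show "rhs kk (vector [1,2,1]) = 0" "rhs kk (vector [4,2,4]) = 0" by (rule eq2, rule eq1)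
    show "(vector [1,2,1] :: real^3) - vector [4,2,4] \<in> stoich_subspace net"
      by (simp add: stoich_UNIV)
  qed
qed
end
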